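(* Let $g\in\mathscr{B}$ and, for $\lambda\in\mathbb{D}\setminus\{0\}$ and $\gamma>0$, let $f_{\gamma,\lambda}(z)=\dfrac{z}{(1-\bar\lambda z)^\gamma}$, $z\in\mathbb{D}$. Then: (a) For every $k\in\mathbb{N}$ and $t\in[0,1]$, \[ |T_g^kf_{\gamma,\lambda}(t\lambda)|\le\frac{\|g\|_{\mathscr{B}}^k}{|\lambda|^k\gamma^k(1-t|\lambda|^2)^\gamma}. \] (b) If $a_0,\dots,a_n\in\mathbb{C}$ and $\gamma|\lambda|>\|g\|_{\mathscr{B}}$, then \[ \Bigl|\sum_{k=0}^na_kT_g^kf_{\gamma,\lambda}(\lambda)\Bigr|\le|a_0|\frac{|\lambda|}{(1-|\lambda|^2)^\gamma}+\Bigl(\sum_{k=1}^n|a_k|\Bigr)\frac{\|g\|_{\mathscr{B}}}{|\lambda|\gamma(1-|\lambda|^2)^\gamma}. \]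
   Context: $\mathbb{D}$ is the unit disc. $\mathscr{B}$ is the Bloch space of analytic $g$ on $\mathbb{D}$ with $\|g\|_{\mathscr{B}}=\sup_{z\in\mathbb{D}}(1-|z|^2)|g'(z)|<\infty$. $T_gf(z)=\int_0^zf(\zeta)g'(\zeta)\,d\zeta$, $T_g^0$ is the identity. The power $(1-\bar\lambda z)^\gamma$ is defined with the principal branch of the logarithm. *)

theory Defs
  imports "HOL-Complex_Analysis.Complex_Analysis"
begin

definition bloch :: "(complex \<Rightarrow> complex) \<Rightarrow> bool" where
  "bloch g \<longleftrightarrow> g holomorphic_on ball 0 1 \<and>
     bdd_above ((\<lambda>z. (1 - (cmod z)^2) * cmod (deriv g z)) ` ball 0 1)"

definition bloch_norm :: "(complex \<Rightarrow> complex) \<Rightarrow> real" where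
  "bloch_norm g = (SUP z\<in>ball 0 1. (1 - (cmod z)^2) * cmod (deriv g z))"

definition Tg :: "(complex \<Rightarrow> complex) \<Rightarrow> (complex \<Rightarrow> complex) \<Rightarrow> complex \<Rightarrow> complex" where
  "Tg g f = (\<lambda>z. contour_integral (linepath 0 z) (\<lambda>w. f w * deriv g w))"

text \<open>f_{gamma,lambda}(z) = z / (1 - conj(lambda) z)^gamma, principal branch
  (complex powr uses the principal logarithm).\<close>
definition ftest :: "real \<Rightarrow> complex \<Rightarrow> complex \<Rightarrow> complex" where
  "ftest \<gamma> l = (\<lambda>z. z / (1 - cnj l * z) powr (of_real \<gamma>))"

end

theory Submission
  imports Defs
begin

lemma Tg_holo:
  assumes h: "h holomorphic_on ball 0 1" and g: "g holomorphic_on ball 0 1"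
  shows "Tg g h holomorphic_on ball 0 1"
proof -
  have q: "(\<lambda>w. h w * deriv g w) holomorphic_on ball 0 1"
    by (intro holomorphic_intros h holomorphic_deriv g) auto
  obtain G where G: "\<And>x. x \<in> ball 0 1 \<Longrightarrow> (G has_field_derivative h x * deriv g x) (at x within ball 0 1)"
    using holomorphic_convex_primitive'[OF convex_ball open_ball q] by blast
  have Gh: "G holomorphic_on ball 0 1"
    using G holomorphic_on_def field_differentiable_def by blast
  have eq: "Tg g h z = G z - G 0" if z: "z \<in> ball 0 1" for z
  proof -
    have "path_image (linepath 0 z) \<subseteq> ball 0 1"
      using z by (simp add: path_image_linepath closed_segment_subset convex_ball)
    then have "((\<lambda>w. h w * deriv g w) has_contour_integral (G z - G 0)) (linepath 0 z)"
      using contour_integral_primitive[OF G] by fastforce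
    then show ?thesis unfolding Tg_def by (rule contour_integral_unique)
  qed
  show ?thesis
    by (rule holomorphic_transform[of "\<lambda>z. G z - G 0"]) (use Gh eq in \<open>auto intro!: holomorphic_intros\<close>)
qed

lemma ftest_holo:
  assumes "lam \<in> ball 0 1"
  shows "ftest \<gamma> lam holomorphic_on ball 0 1"
proof -
  have re: "Re (1 - cnj lam * z) > 0" if "z \<in> ball 0 1" for z
  proof -
    have "cmod (cnj lam * z) < 1" using assms that
      by (simp add: norm_mult) (metis mult_strict_mono' norm_ge_zero mult_1_right less_imp_le)
    then have "Re (cnj lam * z) < 1" using complex_Re_le_cmod le_less_trans by blast
    then show ?thesis by simp
  qed
  have nz: "(1 - cnj lam * z) powr of_real \<gamma> \<noteq> 0" if "z \<in> ball 0 1" for z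
  proof -
    have "1 - cnj lam * z \<noteq> 0" using re[OF that] by (metis less_irrefl zero_complex.simps(1))
    then show ?thesis by (auto simp: powr_def)
  qed
  show ?thesis unfolding ftest_def
    apply (intro holomorphic_intros)
    using re nz by (fastforce simp: complex_nonpos_Reals_iff)+
qed

lemma Tg_step:
  assumes h: "h holomorphic_on ball 0 1" and g: "g holomorphic_on ball 0 1"
    and B: "\<And>z. z \<in> ball 0 1 \<Longrightarrow> (1 - cmod z ^ 2) * cmod (deriv g z) \<le> B"
    and B0: "0 \<le> B" and lam: "lam \<in> ball 0 1" "lam \<noteq> 0" and gam: "\<gamma> > 0" and C0: "0 \<le> C"
    and hb: "\<And>s. s \<in> {0..1} \<Longrightarrow> cmod (h (of_real s * lam)) \<le> C / (1 - s * cmod lam ^ 2) powr \<gamma>"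
    and t: "t \<in> {0..1}"
  shows "cmod (Tg g h (of_real t * lam)) \<le> C * B / (cmod lam * \<gamma>) / (1 - t * cmod lam ^ 2) powr \<gamma>"
proof -
  define r where "r = cmod lam"
  have r: "0 < r" "r < 1" using lam by (auto simp: r_def)
  define w where "w = of_real t * lam"
  define q where "q = (\<lambda>w. h w * deriv g w)"
  have qh: "q holomorphic_on ball 0 1" unfolding q_def
    by (intro holomorphic_intros h holomorphic_deriv g) auto
  have "t * r < 1" using t r by (smt (verit) atLeastAtMost_iff mult_left_le_one_le)
  then have wb: "w \<in> ball 0 1" using t by (auto simp: w_def norm_mult r_def)
  have "path_image (linepath 0 w) \<subseteq> ball 0 1"
    using wb by (simp add: path_image_linepath closed_segment_subset convex_ball)
  then have "continuous_on (closed_segment 0 w) q"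
    using holomorphic_on_imp_continuous_on[OF qh] continuous_on_subset by (metis path_image_linepath)
  then have "(q has_contour_integral Tg g h w) (linepath 0 w)"
    unfolding Tg_def q_def[symmetric] by (intro has_contour_integral_integral contour_integrable_continuous_linepath)
  then have I1: "((\<lambda>x. q (of_real x * w) * w) has_integral Tg g h w) {0..1}"
    unfolding has_contour_integral_linepath by (simp add: linepath_def scaleR_conv_of_real)
  have pos: "0 < 1 - u * t * r^2" if "u \<in> {0..1}" for u
  proof -
    have "u * t \<le> 1" using that t by (auto intro: mult_le_one)
    moreover have "r^2 < 1" using r by (simp add: power_less_one_iff)
    moreover have "u * t * r^2 \<le> r^2" using \<open>u * t \<le> 1\<close> mult_right_mono[of "u*t" 1 "r^2"] by simp
    ultimately have "u * t * r^2 < 1" by linarith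
    then show ?thesis by simp
  qed
  define G where "G = (\<lambda>u. C * B * t * r * (1 - u * t * r^2) powr (- \<gamma> - 1))"
  define \<Psi> where "\<Psi> = (\<lambda>u. C * B / (r * \<gamma>) * (1 - u * t * r^2) powr (- \<gamma>))"
  have I2: "(G has_integral (\<Psi> 1 - \<Psi> 0)) {0..1}"
  proof (rule fundamental_theorem_of_calculus)
    fix u :: real assume u: "u \<in> {0..1}"
    have "(\<Psi> has_real_derivative G u) (at u)"
    proof -
      have dl: "((\<lambda>u. 1 - u * t * r^2) has_real_derivative (- (t * r^2))) (at u)"
        by (auto intro!: derivative_eq_intros)
      have d1: "((\<lambda>u. (1 - u * t * r^2) powr (- \<gamma>)) has_real_derivative
           (- \<gamma>) * (1 - u * t * r^2) powr (- \<gamma> - of_nat 1) * (- (t * r^2))) (at u)"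
        by (rule DERIV_fun_powr[OF dl]) (use pos[OF u] in simp)
      have eq: "C * B / (r * \<gamma>) * ((- \<gamma>) * (1 - u * t * r^2) powr (- \<gamma> - of_nat 1) * (- (t * r^2)))
          = C * B * t * r * (1 - u * t * r^2) powr (- \<gamma> - 1)"
        using gam r by (simp add: field_simps power2_eq_square)
      show ?thesis
        unfolding \<Psi>_def G_def by (rule DERIV_cong[OF DERIV_cmult[OF d1] eq])
    qed
    then show "(\<Psi> has_vector_derivative G u) (at u within {0..1})"
      using has_real_derivative_iff_has_vector_derivative has_vector_derivative_at_within by blast
  qed simp
  have bnd: "norm (q (of_real x * w) * w) \<le> G x" if x: "x \<in> {0..1}" for x
  proof -
    define s where "s = x * t"
    have s: "s \<in> {0..1}" using x t by (auto simp: s_def intro: mult_le_one)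
    have xw: "of_real x * w = of_real s * lam" by (simp add: s_def w_def)
    have a: "0 < 1 - s * r^2" using pos[OF x] by (simp add: s_def)
    have "s * r < 1" using s r by (smt (verit) atLeastAtMost_iff mult_left_le_one_le)
    then have sb: "of_real s * lam \<in> ball 0 1" using s by (auto simp: norm_mult r_def)
    have "cmod (of_real s * lam) ^ 2 = s^2 * r^2" using s by (simp add: norm_mult r_def power_mult_distrib)
    also have "\<dots> \<le> s * r^2" using s mult_left_le_one_le[of s s] by (auto simp: power2_eq_square intro!: mult_right_mono)
    finally have "1 - s * r^2 \<le> 1 - cmod (of_real s * lam) ^ 2" by simp
    then have "(1 - s * r^2) * cmod (deriv g (of_real s * lam)) \<le> B"
      using B[OF sb] by (meson mult_right_mono norm_ge_zero order_trans)
    then have dg: "cmod (deriv g (of_real s * lam)) \<le> B / (1 - s * r^2)"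
      using a by (simp add: field_simps mult.commute)
    have hh: "cmod (h (of_real s * lam)) \<le> C / (1 - s * r^2) powr \<gamma>" using hb[OF s] by (simp add: r_def)
    have nw: "cmod w = t * r" using t by (simp add: w_def norm_mult r_def)
    have "norm (q (of_real x * w) * w) = cmod (h (of_real s * lam)) * cmod (deriv g (of_real s * lam)) * (t * r)"
      by (simp add: q_def xw norm_mult nw)
    also have "\<dots> \<le> C / (1 - s * r^2) powr \<gamma> * (B / (1 - s * r^2)) * (t * r)"
      using hh dg t r a C0 B0 by (intro mult_mono mult_nonneg_nonneg) auto
    also have "\<dots> = G x"
      using a by (simp add: G_def s_def powr_diff powr_minus field_simps)
    finally show ?thesis .
  qed
  have "cmod (Tg g h w) \<le> \<Psi> 1 - \<Psi> 0"
    using integral_norm_bound_integral[OF has_integral_integrable[OF I1] has_integral_integrable[OF I2] bnd]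
      integral_unique[OF I1] integral_unique[OF I2] by simp
  also have "\<dots> \<le> \<Psi> 1"
    unfolding \<Psi>_def using C0 B0 r gam by simp
  also have "\<dots> = C * B / (cmod lam * \<gamma>) / (1 - t * cmod lam ^ 2) powr \<gamma>"
    by (simp add: \<Psi>_def r_def powr_minus divide_inverse)
  finally show ?thesis by (simp add: w_def)
qed

theorem lemma4p11:
  fixes g :: "complex \<Rightarrow> complex" and \<gamma> :: real and lam :: complex
  assumes "bloch g" and "lam \<in> ball 0 1" and "lam \<noteq> 0" and "\<gamma> > 0"
  shows "(\<forall>(k::nat) (t::real). t \<in> {0..1} \<longrightarrow>
            cmod (((Tg g) ^^ k) (ftest \<gamma> lam) (of_real t * lam))
              \<le> bloch_norm g ^ k /
                 (cmod lam ^ k * \<gamma> ^ k * (1 - t * (cmod lam)^2) powr \<gamma>))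
       \<and> (\<forall>(n::nat) (a::nat \<Rightarrow> complex). \<gamma> * cmod lam > bloch_norm g \<longrightarrow>
            cmod (\<Sum>k=0..n. a k * ((Tg g) ^^ k) (ftest \<gamma> lam) lam)
              \<le> cmod (a 0) * cmod lam / (1 - (cmod lam)^2) powr \<gamma>
                 + (\<Sum>k=1..n. cmod (a k)) * bloch_norm g
                     / (cmod lam * \<gamma> * (1 - (cmod lam)^2) powr \<gamma>))"
proof -
  define B where "B = bloch_norm g"
  define r where "r = cmod lam"
  define F where "F = ftest \<gamma> lam"
  have r: "0 < r" "r < 1" using assms by (auto simp: r_def)
  have gam: "\<gamma> > 0" by fact
  have gh: "g holomorphic_on ball 0 1" and bdd: "bdd_above ((\<lambda>z. (1 - (cmod z)^2) * cmod (deriv g z)) ` ball 0 1)"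
    using assms(1) by (auto simp: bloch_def)
  have Bb: "(1 - cmod z ^ 2) * cmod (deriv g z) \<le> B" if "z \<in> ball 0 1" for z
    unfolding B_def bloch_norm_def by (rule cSUP_upper[OF that bdd])
  have B0: "0 \<le> B" using Bb[of 0] by (simp) (meson norm_ge_zero order_trans)
  have holo: "((Tg g) ^^ k) F holomorphic_on ball 0 1" for k
    by (induction k) (auto simp: F_def ftest_holo[OF assms(2)] Tg_holo[OF _ gh])
  have Fval: "F (of_real s * lam) = of_real s * lam / of_real ((1 - s * r^2) powr \<gamma>)"
    if s: "s \<in> {0..1}" for s
  proof -
    have e: "cnj lam * lam = of_real (r^2)" using complex_norm_square[of lam] by (simp add: r_def mult.commute)
    have "1 - cnj lam * (of_real s * lam) = 1 - of_real s * (cnj lam * lam)"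
      by (simp add: algebra_simps)
    also have "\<dots> = of_real (1 - s * r^2)" unfolding e by simp
    finally have "1 - cnj lam * (of_real s * lam) = of_real (1 - s * r^2)" .
    moreover have "0 \<le> 1 - s * r^2"
    proof -
      have "s * r^2 \<le> 1" using s r by (auto intro: mult_le_one simp: power_le_one)
      then show ?thesis by simp
    qed
    ultimately have "(1 - cnj lam * (of_real s * lam)) powr of_real \<gamma> = of_real ((1 - s * r^2) powr \<gamma>)"
      by (simp only: powr_of_real)
    then show ?thesis by (simp only: F_def ftest_def)
  qed
  have P0: "0 < 1 - s * r^2" if s: "s \<in> {0..1}" for s
  proof -
    have "r^2 < 1" using r by (simp add: power_less_one_iff)
    moreover have "s * r^2 \<le> r^2" using s mult_right_mono[of s 1 "r^2"] by simp
    ultimately show ?thesis by simp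
  qed
  have base: "cmod (F (of_real s * lam)) \<le> 1 / (1 - s * r^2) powr \<gamma>" if s: "s \<in> {0..1}" for s
  proof -
    have "s * r \<le> 1" using s r by (auto intro: mult_le_one)
    then show ?thesis using s P0[OF s]
      by (simp add: Fval norm_mult norm_divide r_def divide_right_mono)
  qed
  have ind: "\<forall>t\<in>{0..1}. cmod (((Tg g) ^^ k) F (of_real t * lam)) \<le> (B / (r * \<gamma>)) ^ k / (1 - t * r^2) powr \<gamma>" for k
  proof (induction k)
    case 0
    then show ?case using base by simp
  next
    case (Suc k)
    show ?case
    proof
      fix t :: real assume t: "t \<in> {0..1}"
      have "cmod (Tg g (((Tg g) ^^ k) F) (of_real t * lam))
          \<le> (B / (r * \<gamma>)) ^ k * B / (cmod lam * \<gamma>) / (1 - t * cmod lam ^ 2) powr \<gamma>"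
        by (rule Tg_step[OF holo gh Bb B0 assms(2,3) gam _ _ t])
           (use B0 r gam Suc.IH in \<open>auto simp: r_def\<close>)
      then show "cmod (((Tg g) ^^ Suc k) F (of_real t * lam)) \<le> (B / (r * \<gamma>)) ^ Suc k / (1 - t * r^2) powr \<gamma>"
        by (simp add: r_def mult.commute)
    qed
  qed
  have partA: "cmod (((Tg g) ^^ k) F (of_real t * lam)) \<le> B ^ k / (r ^ k * \<gamma> ^ k * (1 - t * r^2) powr \<gamma>)"
    if t: "t \<in> {0..1}" for k t
  proof -
    have "(B / (r * \<gamma>)) ^ k / (1 - t * r^2) powr \<gamma> = B ^ k / (r ^ k * \<gamma> ^ k * (1 - t * r^2) powr \<gamma>)"
      by (simp add: power_divide power_mult_distrib)
    then show ?thesis using ind[of k] t by metis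
  qed
  have partB: "cmod (\<Sum>k=0..n. a k * ((Tg g) ^^ k) F lam)
        \<le> cmod (a 0) * r / (1 - r^2) powr \<gamma> + (\<Sum>k=1..n. cmod (a k)) * B / (r * \<gamma> * (1 - r^2) powr \<gamma>)"
    if gt: "\<gamma> * r > B" for n a
  proof -
    define P where "P = (1 - r^2) powr \<gamma>"
    define \<rho> where "\<rho> = B / (r * \<gamma>)"
    have P: "P > 0" using P0[of 1] by (simp add: P_def)
    have \<rho>: "0 \<le> \<rho>" "\<rho> < 1" using gt B0 r gam by (auto simp: \<rho>_def field_simps mult.commute)
    have X: "cmod (((Tg g) ^^ k) F lam) \<le> \<rho> ^ k / P" for k
      using bspec[OF ind[of k], of 1] by (simp add: \<rho>_def P_def)
    have X0: "cmod (((Tg g) ^^ 0) F lam) = r / P"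
      using Fval[of 1] P by (simp add: P_def norm_divide r_def)
    have Xk: "cmod (a k * ((Tg g) ^^ k) F lam) \<le> cmod (a k) * (\<rho> / P)" if "k \<in> {1..n}" for k
    proof -
      have "\<rho> ^ k \<le> \<rho>" using \<rho> that power_decreasing[of 1 k \<rho>] by simp
      then have "\<rho> ^ k / P \<le> \<rho> / P" using P by (simp add: divide_right_mono)
      then have "cmod (((Tg g) ^^ k) F lam) \<le> \<rho> / P" using X[of k] by linarith
      then show ?thesis unfolding norm_mult by (metis mult_left_mono norm_ge_zero times_divide_eq_right)
    qed
    have "cmod (\<Sum>k=0..n. a k * ((Tg g) ^^ k) F lam)
        \<le> cmod (a 0 * ((Tg g) ^^ 0) F lam) + cmod (\<Sum>k=1..n. a k * ((Tg g) ^^ k) F lam)"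
      by (simp add: sum.atLeast_Suc_atMost norm_triangle_ineq del: funpow.simps)
    also have "cmod (\<Sum>k=1..n. a k * ((Tg g) ^^ k) F lam) \<le> (\<Sum>k=1..n. cmod (a k) * (\<rho> / P))"
      by (rule order_trans[OF norm_sum sum_mono[OF Xk]])
    also have "(\<Sum>k=1..n. cmod (a k) * (\<rho> / P)) = (\<Sum>k=1..n. cmod (a k)) * B / (r * \<gamma> * P)"
      by (simp add: sum_distrib_right sum_divide_distrib \<rho>_def)
    finally show ?thesis using X0 by (simp add: norm_mult P_def)
  qed
  show ?thesis
    using partA partB by (simp add: B_def r_def F_def)
qed

end
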